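(* Let $d \geq 2$ and let $\varGamma$ be a lattice in $\mathbb{R}^d$. The map $\eta\colon \operatorname{SOS}(\varGamma)\to\mathbb{R}^\bullet/\mathbb{Q}^\bullet$, $R\mapsto[\alpha]$, where $\alpha$ is any element of $\operatorname{scal}_\varGamma(R)$ and $[\alpha]$ denotes its class in $\mathbb{R}^\bullet/\mathbb{Q}^\bullet$, is a group homomorphism with kernel $\operatorname{SOC}(\varGamma)$.
   Context: A lattice in $\mathbb{R}^d$ is a subgroup of the form $\mathbb{Z}b_1\oplus\cdots\oplus\mathbb{Z}b_d$ where $\{b_1,\dots,b_d\}$ is a basis of $\mathbb{R}^d$. Two lattices $\varGamma,\varGamma'$ are commensurate, written $\varGamma\sim\varGamma'$, if $\varGamma\cap\varGamma'$ has finite index both in $\varGamma$ and in $\varGamma'$. $\operatorname{SOC}(\varGamma)=\{R\in\operatorname{SO}(d):\varGamma\sim R\varGamma\}$ (coincidence rotations) and $\operatorname{SOS}(\varGamma)=\{R\in\operatorname{SO}(d):\varGamma\sim\alpha R\varGamma\text{ for some }\alpha>0\}$ (similarity rotations); both are subgroups of $\operatorname{SO}(d)$. For $R\in\operatorname{SO}(d)$, $\operatorname{scal}_\varGamma(R)=\{\alpha\in\mathbb{R}:\varGamma\sim\alpha R\varGamma\}$, which is nonempty for $R\in\operatorname{SOS}(\varGamma)$, and any two of its elements have rational ratio, so $\eta$ is well defined. $\mathbb{R}^\bullet$ and $\mathbb{Q}^\bullet$ denote the multiplicative groups of nonzero real and nonzero rational numbers. *)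

theory Defs
  imports "HOL-Analysis.Analysis" "HOL-Algebra.Algebra"
begin

definition is_lattice :: "(real^'n) set \<Rightarrow> bool" where
  "is_lattice \<Gamma> \<longleftrightarrow> (\<exists>B::real^'n^'n. invertible B \<and>
      \<Gamma> = {B *v (\<chi> i. of_int (z i)) | z :: 'n \<Rightarrow> int. True})"

definition finite_index :: "(real^'n) set \<Rightarrow> (real^'n) set \<Rightarrow> bool" where
  "finite_index H G \<longleftrightarrow> finite ((\<lambda>x. (\<lambda>h. x + h) ` H) ` G)"

definition commensurate :: "(real^'n) set \<Rightarrow> (real^'n) set \<Rightarrow> bool" where
  "commensurate \<Gamma> \<Gamma>' \<longleftrightarrow> finite_index (\<Gamma> \<inter> \<Gamma>') \<Gamma> \<and> finite_index (\<Gamma> \<inter> \<Gamma>') \<Gamma>'"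

definition SO :: "(real^'n^'n) set" where
  "SO = {R. orthogonal_matrix R \<and> det R = 1}"

definition scaled_rot :: "real \<Rightarrow> real^'n^'n \<Rightarrow> (real^'n) set \<Rightarrow> (real^'n) set" where
  "scaled_rot \<alpha> R \<Gamma> = (\<lambda>x. \<alpha> *\<^sub>R (R *v x)) ` \<Gamma>"

definition SOC :: "(real^'n) set \<Rightarrow> (real^'n^'n) set" where
  "SOC \<Gamma> = {R \<in> SO. commensurate \<Gamma> ((\<lambda>x. R *v x) ` \<Gamma>)}"

definition SOS :: "(real^'n) set \<Rightarrow> (real^'n^'n) set" where
  "SOS \<Gamma> = {R \<in> SO. \<exists>\<alpha>>0. commensurate \<Gamma> (scaled_rot \<alpha> R \<Gamma>)}"

definition scal :: "(real^'n) set \<Rightarrow> real^'n^'n \<Rightarrow> real set" where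
  "scal \<Gamma> R = {\<alpha>. commensurate \<Gamma> (scaled_rot \<alpha> R \<Gamma>)}"

definition SOS_group :: "(real^'n) set \<Rightarrow> (real^'n^'n) monoid" where
  "SOS_group \<Gamma> = \<lparr>carrier = SOS \<Gamma>, mult = (**), one = mat 1\<rparr>"

definition Rstar :: "real monoid" where
  "Rstar = \<lparr>carrier = {x. x \<noteq> 0}, mult = (*), one = 1\<rparr>"

definition Qstar :: "real set" where
  "Qstar = {of_rat q | q. q \<noteq> 0}"

definition eta :: "(real^'n) set \<Rightarrow> real^'n^'n \<Rightarrow> real set" where
  "eta \<Gamma> R = Qstar #>\<^bsub>Rstar\<^esub> (SOME \<alpha>. \<alpha> \<in> scal \<Gamma> R)"

end

theory Submission
  imports Defs
begin

definition lat :: "real^'n^'n \<Rightarrow> (real^'n) set" where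
  "lat M = {M *v (\<chi> i. of_int (z i)) | z :: 'n \<Rightarrow> int. True}"

definition cov :: "(real^'n) set \<Rightarrow> (real^'n) set \<Rightarrow> bool" where
  "cov H G \<longleftrightarrow> (\<exists>F. finite F \<and> G \<subseteq> {f + h | f h. f \<in> F \<and> h \<in> H})"

definition subgrp :: "(real^'n) set \<Rightarrow> bool" where
  "subgrp S \<longleftrightarrow> 0 \<in> S \<and> (\<forall>x\<in>S. \<forall>y\<in>S. x + y \<in> S) \<and> (\<forall>x\<in>S. -x \<in> S)"

lemma subgrp_diff: "subgrp S \<Longrightarrow> x \<in> S \<Longrightarrow> y \<in> S \<Longrightarrow> x - y \<in> S"
  unfolding subgrp_def by (metis diff_conv_add_uminus)

lemma subgrp_Int: "subgrp A \<Longrightarrow> subgrp B \<Longrightarrow> subgrp (A \<inter> B)"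
  unfolding subgrp_def by auto

lemma subgrp_lat: "subgrp (lat M)"
  unfolding subgrp_def lat_def
proof (intro conjI ballI)
  show "0 \<in> {M *v (\<chi> i. of_int (z i)) |z. True}"
    by (rule CollectI, rule exI[of _ "\<lambda>_. 0"]) (simp add: zero_vec_def[symmetric])
next
  fix x y assume "x \<in> {M *v (\<chi> i. real_of_int (z i)) |z. True}" "y \<in> {M *v (\<chi> i. real_of_int (z i)) |z. True}"
  then obtain z w where zw: "x = M *v (\<chi> i. of_int (z i))" "y = M *v (\<chi> i. of_int (w i))" by auto
  have e: "(\<chi> i. (of_int (z i + w i)::real)) = (\<chi> i. of_int (z i)) + (\<chi> i. of_int (w i))"
    by (simp add: vec_eq_iff)
  have "x + y = M *v (\<chi> i. of_int (z i + w i))"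
    unfolding e matrix_vector_right_distrib zw ..
  then show "x + y \<in> {M *v (\<chi> i. real_of_int (z i)) |z. True}"
    by (intro CollectI exI[of _ "\<lambda>i. z i + w i"]) simp
next
  fix x assume "x \<in> {M *v (\<chi> i. real_of_int (z i)) |z. True}"
  then obtain z where xz: "x = M *v (\<chi> i. of_int (z i))" by auto
  have e: "(\<chi> i. (of_int (- z i)::real)) = - (\<chi> i. of_int (z i))"
    by (simp add: vec_eq_iff)
  have "-x = M *v (\<chi> i. of_int (- z i))"
    unfolding e xz by (metis matrix_vector_mult_scaleR scaleR_minus1_left)
  then show "-x \<in> {M *v (\<chi> i. real_of_int (z i)) |z. True}"
    by (intro CollectI exI[of _ "\<lambda>i. - z i"]) simp
qed

lemma cov_trans: "cov H K \<Longrightarrow> cov K G \<Longrightarrow> cov H G"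
proof -
  assume "cov H K" "cov K G"
  then obtain F1 F2 where F: "finite F1" "K \<subseteq> {f + h | f h. f \<in> F1 \<and> h \<in> H}"
     "finite F2" "G \<subseteq> {f + h | f h. f \<in> F2 \<and> h \<in> K}" unfolding cov_def by blast
  have "G \<subseteq> {f + h | f h. f \<in> (\<lambda>(a,b). a + b) ` (F1 \<times> F2) \<and> h \<in> H}"
  proof
    fix x assume "x \<in> G"
    then obtain f2 k where a: "f2 \<in> F2" "k \<in> K" "x = f2 + k" using F by blast
    then obtain f1 h where b: "f1 \<in> F1" "h \<in> H" "k = f1 + h" using F by blast
    have 1: "x = (f1 + f2) + h" using a(3) b(3) by (simp add: algebra_simps)
    have "(f1, f2) \<in> F1 \<times> F2" using a b by blast
    then have 2: "f1 + f2 \<in> (\<lambda>(a,b). a + b) ` (F1 \<times> F2)" by (rule rev_image_eqI) simp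
    show "x \<in> {f + h | f h. f \<in> (\<lambda>(a,b). a + b) ` (F1 \<times> F2) \<and> h \<in> H}"
      using 1 2 b(2) by blast
  qed
  moreover have "finite ((\<lambda>(a,b). a + b) ` (F1 \<times> F2))" using F by simp
  ultimately show "cov H G" unfolding cov_def by blast
qed

lemma cov_mono:
  assumes "cov H G" "H \<subseteq> H'" shows "cov H' G"
proof -
  obtain F where F: "finite F" "G \<subseteq> {f + h | f h. f \<in> F \<and> h \<in> H}" using assms(1) unfolding cov_def by blast
  have "G \<subseteq> {f + h | f h. f \<in> F \<and> h \<in> H'}"
  proof
    fix x assume "x \<in> G"
    then obtain f h where "f \<in> F" "h \<in> H" "x = f + h" using F by blast
    then show "x \<in> {f + h | f h. f \<in> F \<and> h \<in> H'}" using assms(2) by blast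
  qed
  then show ?thesis unfolding cov_def using F(1) by blast
qed

lemma cov_Int:
  assumes "subgrp A" "subgrp B" "subgrp C" "cov (B \<inter> C) B"
  shows "cov (A \<inter> B \<inter> C) (A \<inter> B)"
proof -
  obtain F where F: "finite F" "B \<subseteq> {f + h | f h. f \<in> F \<and> h \<in> B \<inter> C}" using assms(4) unfolding cov_def by blast
  define g where "g f = (SOME x. x \<in> A \<inter> B \<and> x - f \<in> B \<inter> C)" for f
  have "A \<inter> B \<subseteq> {f + h | f h. f \<in> g ` F \<and> h \<in> A \<inter> B \<inter> C}"
  proof
    fix x assume x: "x \<in> A \<inter> B"
    then obtain f k where fk: "f \<in> F" "k \<in> B \<inter> C" "x = f + k" using F by blast
    have "\<exists>y. y \<in> A \<inter> B \<and> y - f \<in> B \<inter> C" using x fk by (intro exI[of _ x]) auto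
    then have "g f \<in> A \<inter> B \<and> g f - f \<in> B \<inter> C" unfolding g_def by (rule someI_ex)
    then have g: "g f \<in> A \<inter> B" "g f - f \<in> B \<inter> C" by auto
    have sBC: "subgrp (B \<inter> C)" and sAB: "subgrp (A \<inter> B)" using assms subgrp_Int by blast+
    have "x - g f = k - (g f - f)" using fk by simp
    moreover have "k - (g f - f) \<in> B \<inter> C" using subgrp_diff[OF sBC fk(2) g(2)] .
    ultimately have 1: "x - g f \<in> B \<inter> C" by (simp only:)
    have 2: "x - g f \<in> A \<inter> B" using subgrp_diff[OF sAB x g(1)] .
    have 3: "x = g f + (x - g f)" by simp
    have 4: "g f \<in> g ` F" using fk(1) by blast
    have 5: "x - g f \<in> A \<inter> B \<inter> C" using 1 2 by blast
    show "x \<in> {f + h | f h. f \<in> g ` F \<and> h \<in> A \<inter> B \<inter> C}"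
      using 3 4 5 by blast
  qed
  moreover have "finite (g ` F)" using F by simp
  ultimately show ?thesis unfolding cov_def by blast
qed

lemma finite_index_cov:
  assumes "subgrp H" "H \<subseteq> G"
  shows "finite_index H G \<longleftrightarrow> cov H G"
proof
  assume "finite_index H G"
  then have fin: "finite ((\<lambda>x. (\<lambda>h. x + h) ` H) ` G)" unfolding finite_index_def .
  define r where "r C = (SOME x. x \<in> G \<and> C = (\<lambda>h. x + h) ` H)" for C
  have "G \<subseteq> {f + h | f h. f \<in> r ` ((\<lambda>x. (\<lambda>h. x + h) ` H) ` G) \<and> h \<in> H}"
  proof
    fix x assume x: "x \<in> G"
    let ?C = "(\<lambda>h. x + h) ` H"
    have "\<exists>y. y \<in> G \<and> ?C = (\<lambda>h. y + h) ` H" using x by blast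
    then have "r ?C \<in> G \<and> ?C = (\<lambda>h. r ?C + h) ` H" unfolding r_def by (rule someI_ex)
    then have r: "r ?C \<in> G" "?C = (\<lambda>h. r ?C + h) ` H" by auto
    have "0 \<in> H" using assms(1) unfolding subgrp_def by blast
    then have "x + 0 \<in> ?C" by (rule imageI)
    then have "x \<in> (\<lambda>h. r ?C + h) ` H" using r(2) by simp
    then obtain h where h: "h \<in> H" "x = r ?C + h" by blast
    have "r ?C \<in> r ` ((\<lambda>x. (\<lambda>h. x + h) ` H) ` G)" using x by blast
    then show "x \<in> {f + h | f h. f \<in> r ` ((\<lambda>x. (\<lambda>h. x + h) ` H) ` G) \<and> h \<in> H}"
      using h by blast
  qed
  moreover have "finite (r ` ((\<lambda>x. (\<lambda>h. x + h) ` H) ` G))" using fin by (rule finite_imageI)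
  ultimately show "cov H G" unfolding cov_def by blast
next
  assume "cov H G"
  then obtain F where F: "finite F" "G \<subseteq> {f + h | f h. f \<in> F \<and> h \<in> H}" unfolding cov_def by blast
  have "(\<lambda>x. (\<lambda>h. x + h) ` H) ` G \<subseteq> (\<lambda>x. (\<lambda>h. x + h) ` H) ` F"
  proof
    fix C assume "C \<in> (\<lambda>x. (\<lambda>h. x + h) ` H) ` G"
    then obtain x where x: "x \<in> G" "C = (\<lambda>h. x + h) ` H" by blast
    then obtain f h where fh: "f \<in> F" "h \<in> H" "x = f + h" using F by blast
    have "(\<lambda>h. x + h) ` H = (\<lambda>h. f + h) ` H"
    proof (rule subset_antisym; rule subsetI)
      fix y assume "y \<in> (\<lambda>h. x + h) ` H"
      then obtain h' where h': "h' \<in> H" "y = x + h'" by blast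
      have "h + h' \<in> H" using fh(2) h'(1) assms(1) unfolding subgrp_def by blast
      moreover have "y = f + (h + h')" using h'(2) fh(3) by (simp add: add.assoc)
      ultimately show "y \<in> (\<lambda>h. f + h) ` H" by (rule rev_image_eqI)
    next
      fix y assume "y \<in> (\<lambda>h. f + h) ` H"
      then obtain h' where h': "h' \<in> H" "y = f + h'" by blast
      have "h' - h \<in> H" using fh(2) h'(1) subgrp_diff[OF assms(1)] by blast
      moreover have "y = x + (h' - h)" using h'(2) fh(3) by simp
      ultimately show "y \<in> (\<lambda>h. x + h) ` H" by (rule rev_image_eqI)
    qed
    then show "C \<in> (\<lambda>x. (\<lambda>h. x + h) ` H) ` F" using x fh by blast
  qed
  then show "finite_index H G" unfolding finite_index_def
    by (rule finite_subset) (rule finite_imageI[OF F(1)])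
qed

lemma comm_cov:
  assumes "subgrp A" "subgrp B"
  shows "commensurate A B \<longleftrightarrow> cov (A \<inter> B) A \<and> cov (A \<inter> B) B"
proof -
  have "finite_index (A \<inter> B) A \<longleftrightarrow> cov (A \<inter> B) A"
    by (rule finite_index_cov[OF subgrp_Int[OF assms]]) blast
  moreover have "finite_index (A \<inter> B) B \<longleftrightarrow> cov (A \<inter> B) B"
    by (rule finite_index_cov[OF subgrp_Int[OF assms]]) blast
  ultimately show ?thesis unfolding commensurate_def by simp
qed

lemma comm_sym: "commensurate A B \<Longrightarrow> commensurate B A"
  unfolding commensurate_def by (simp add: Int_commute)

lemma comm_trans:
  assumes "subgrp A" "subgrp B" "subgrp C" "commensurate A B" "commensurate B C"
  shows "commensurate A C"
proof -
  have ab: "cov (A \<inter> B) A" "cov (A \<inter> B) B" and bc: "cov (B \<inter> C) B" "cov (B \<inter> C) C"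
    using assms(4,5) comm_cov[OF assms(1,2)] comm_cov[OF assms(2,3)] by simp_all
  have 1: "cov (A \<inter> B \<inter> C) (A \<inter> B)" using cov_Int[OF assms(1-3) bc(1)] .
  have "cov (A \<inter> B \<inter> C) A" using cov_trans[OF 1 ab(1)] .
  then have "cov (A \<inter> C) A" by (rule cov_mono) auto
  moreover
  have ba: "cov (B \<inter> A) B" using ab(2) by (subst Int_commute)
  have cb: "cov (C \<inter> B) C" using bc(2) by (subst Int_commute)
  have 2: "cov (C \<inter> B \<inter> A) (C \<inter> B)" using cov_Int[OF assms(3,2,1) ba] .
  have "cov (C \<inter> B \<inter> A) C" using cov_trans[OF 2 cb] .
  then have "cov (A \<inter> C) C" by (rule cov_mono) auto
  ultimately show ?thesis by (simp add: comm_cov[OF assms(1,3)])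
qed

lemma lat_image: "lat M = (\<lambda>z. M *v (\<chi> i. of_int (z i))) ` UNIV"
  unfolding lat_def by blast

lemma lat_mult: "(\<lambda>x. A *v x) ` lat M = lat (A ** M)"
  unfolding lat_image image_image by (simp add: matrix_vector_mul_assoc)

lemma scaled_rot_lat: "scaled_rot \<alpha> R (lat B) = lat ((\<alpha> *\<^sub>R R) ** B)"
proof -
  have "scaled_rot \<alpha> R (lat B) = (\<lambda>x. (\<alpha> *\<^sub>R R) *v x) ` lat B"
    unfolding scaled_rot_def by (simp add: scaleR_matrix_vector_assoc)
  then show ?thesis using lat_mult by metis
qed

lemma finite_index_image:
  assumes "\<And>x y. f (x + y) = f x + f y" "finite_index H G"
  shows "finite_index (f ` H) (f ` G)"
proof -
  have "(\<lambda>y. (\<lambda>h. y + h) ` (f ` H)) ` (f ` G) = (\<lambda>C. f ` C) ` ((\<lambda>x. (\<lambda>h. x + h) ` H) ` G)"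
    by (auto simp: image_image assms(1))
  then show ?thesis using assms(2) unfolding finite_index_def by simp
qed

lemma comm_image:
  fixes A :: "real^'n^'n"
  assumes "inj ((*v) A)" "commensurate S T"
  shows "commensurate ((\<lambda>x. A *v x) ` S) ((\<lambda>x. A *v x) ` T)"
proof -
  have e: "(\<lambda>x. A *v x) ` (S \<inter> T) = (\<lambda>x. A *v x) ` S \<inter> (\<lambda>x. A *v x) ` T"
    using assms(1) by (simp add: image_Int)
  have ad: "\<And>x y. A *v (x + y) = A *v x + A *v y" by (rule matrix_vector_right_distrib)
  have c: "finite_index (S \<inter> T) S" "finite_index (S \<inter> T) T" using assms(2) unfolding commensurate_def by auto
  show ?thesis unfolding commensurate_def e[symmetric]
    using finite_index_image[of "\<lambda>x. A *v x", OF ad c(1)] finite_index_image[of "\<lambda>x. A *v x", OF ad c(2)]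
    by simp
qed

lemma inv_inj:
  fixes M :: "real^'n^'n"
  assumes "invertible M" shows "inj ((*v) M)"
proof -
  obtain M' where "M' ** M = mat 1" using assms unfolding invertible_def by blast
  then show ?thesis unfolding inj_def by (metis matrix_vector_mul_assoc matrix_vector_mul_lid)
qed

lemma invertible_scaleR:
  fixes M :: "real^'n^'n"
  assumes "invertible M" "c \<noteq> 0" shows "invertible (c *\<^sub>R M)"
proof -
  obtain M' where "M ** M' = mat 1" "M' ** M = mat 1" using assms unfolding invertible_def by blast
  then have "(c *\<^sub>R M) ** ((1/c) *\<^sub>R M') = mat 1" "((1/c) *\<^sub>R M') ** (c *\<^sub>R M) = mat 1"
    using assms(2) by (simp_all add: matrix_scalar_ac scalar_matrix_assoc[symmetric])
  then show ?thesis unfolding invertible_def by blast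
qed

lemma lat_int_sub: "lat (of_int k *\<^sub>R M) \<subseteq> lat M"
proof
  fix x assume "x \<in> lat (of_int k *\<^sub>R M)"
  then obtain z where z: "x = (of_int k *\<^sub>R M) *v (\<chi> i. of_int (z i))" unfolding lat_def by blast
  have "(\<chi> i. (of_int (k * z i)::real)) = of_int k *\<^sub>R (\<chi> i. of_int (z i))"
    by (simp add: vec_eq_iff)
  then have "x = M *v (\<chi> i. of_int (k * z i))"
    unfolding z by (simp add: scaleR_matrix_vector_assoc[symmetric] matrix_vector_mult_scaleR)
  then show "x \<in> lat M" unfolding lat_def by (intro CollectI exI[of _ "\<lambda>i. k * z i"]) simp
qed

lemma cov_int:
  fixes M :: "real^'n^'n"
  assumes k: "k \<noteq> 0"
  shows "cov (lat (of_int k *\<^sub>R M)) (lat M)"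
proof -
  define S where "S = {r :: 'n \<Rightarrow> int. \<forall>i. r i \<in> {-\<bar>k\<bar>..\<bar>k\<bar>}}"
  have fS: "finite S"
  proof -
    have "finite (PiE (UNIV::'n set) (\<lambda>_. {-\<bar>k\<bar>..\<bar>k\<bar>}))" by (rule finite_PiE) auto
    then show ?thesis unfolding S_def PiE_UNIV_domain Pi_def by simp
  qed
  define F where "F = (\<lambda>r. M *v (\<chi> i. of_int (r i))) ` S"
  have "lat M \<subseteq> {f + h | f h. f \<in> F \<and> h \<in> lat (of_int k *\<^sub>R M)}"
  proof
    fix x assume "x \<in> lat M"
    then obtain z where z: "x = M *v (\<chi> i. of_int (z i))" unfolding lat_def by blast
    define r where "r i = z i mod k" for i
    define q where "q i = z i div k" for i
    have rS: "r \<in> S" unfolding S_def r_def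
    proof (intro CollectI allI)
      fix i
      have "\<bar>z i mod k\<bar> < \<bar>k\<bar>" using abs_mod_less[OF k] .
      then show "z i mod k \<in> {-\<bar>k\<bar>..\<bar>k\<bar>}" by auto
    qed
    have "(\<chi> i. (of_int (z i)::real)) = (\<chi> i. of_int (r i)) + of_int k *\<^sub>R (\<chi> i. of_int (q i))"
    proof -
      have "\<And>i. z i = r i + k * q i" unfolding r_def q_def by simp
      then have "\<And>i. (of_int (z i)::real) = of_int (r i) + of_int k * of_int (q i)" by (metis of_int_add of_int_mult)
      then show ?thesis by (simp add: vec_eq_iff)
    qed
    then have "x = M *v (\<chi> i. of_int (r i)) + (of_int k *\<^sub>R M) *v (\<chi> i. of_int (q i))"
      unfolding z by (simp add: matrix_vector_right_distrib scaleR_matrix_vector_assoc[symmetric] matrix_vector_mult_scaleR)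
    moreover have "(of_int k *\<^sub>R M) *v (\<chi> i. of_int (q i)) \<in> lat (of_int k *\<^sub>R M)"
      unfolding lat_def by blast
    ultimately show "x \<in> {f + h | f h. f \<in> F \<and> h \<in> lat (of_int k *\<^sub>R M)}"
      using rS unfolding F_def by blast
  qed
  moreover have "finite F" unfolding F_def using fS by simp
  ultimately show ?thesis unfolding cov_def by blast
qed

lemma comm_rat:
  fixes M :: "real^'n^'n"
  assumes "q \<in> \<rat>" "q \<noteq> 0"
  shows "commensurate (lat (q *\<^sub>R M)) (lat M)"
proof -
  obtain a b :: int where ab: "b > 0" "q = of_int a / of_int b" using Rats_cases'[OF assms(1)] by metis
  have a: "a \<noteq> 0" using ab assms(2) by auto
  have e: "of_int a *\<^sub>R M = of_int b *\<^sub>R (q *\<^sub>R M)" using ab by simp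
  have 1: "lat (of_int a *\<^sub>R M) \<subseteq> lat (q *\<^sub>R M) \<inter> lat M"
    using lat_int_sub[of a M] lat_int_sub[of b "q *\<^sub>R M"] unfolding e[symmetric] by blast
  have "cov (lat (q *\<^sub>R M) \<inter> lat M) (lat M)"
    using cov_mono[OF cov_int[OF a] 1] .
  moreover have "cov (lat (q *\<^sub>R M) \<inter> lat M) (lat (q *\<^sub>R M))"
    using cov_mono[OF cov_int[of b "q *\<^sub>R M"] 1[unfolded e]] ab(1) by simp
  ultimately show ?thesis by (simp add: comm_cov[OF subgrp_lat subgrp_lat])
qed

lemma subgrp_nat: "subgrp G \<Longrightarrow> v \<in> G \<Longrightarrow> of_nat n *\<^sub>R v \<in> G"
proof (induction n)
  case 0 then show ?case unfolding subgrp_def by simp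
next
  case (Suc n) then show ?case unfolding subgrp_def by (simp add: algebra_simps)
qed

lemma pig:
  assumes "cov H G" "subgrp H" "subgrp G" "v \<in> G"
  shows "\<exists>m::int. m \<noteq> 0 \<and> of_int m *\<^sub>R v \<in> H"
proof -
  obtain F where F: "finite F" "G \<subseteq> {f + h | f h. f \<in> F \<and> h \<in> H}" using assms(1) unfolding cov_def by blast
  define g where "g n = (SOME f. f \<in> F \<and> of_nat n *\<^sub>R v - f \<in> H)" for n :: nat
  have g: "g n \<in> F \<and> of_nat n *\<^sub>R v - g n \<in> H" for n
  proof -
    have "of_nat n *\<^sub>R v \<in> G" using subgrp_nat assms by blast
    then obtain f h where "f \<in> F" "h \<in> H" "of_nat n *\<^sub>R v = f + h" using F by blast
    then have "\<exists>f. f \<in> F \<and> of_nat n *\<^sub>R v - f \<in> H" by (intro exI[of _ f]) simp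
    then show ?thesis unfolding g_def by (rule someI_ex)
  qed
  have "\<not> inj g"
  proof
    assume "inj g"
    then have "infinite (range g)" by (simp add: range_inj_infinite)
    moreover have "range g \<subseteq> F" using g by blast
    ultimately show False using F(1) finite_subset by blast
  qed
  then obtain n n' where nn: "n \<noteq> n'" "g n = g n'" unfolding inj_def by blast
  have "(of_nat n *\<^sub>R v - g n) - (of_nat n' *\<^sub>R v - g n') \<in> H"
    using subgrp_diff[OF assms(2)] g by blast
  then have "of_int (int n - int n') *\<^sub>R v \<in> H" using nn by (simp add: algebra_simps)
  then show ?thesis using nn by (intro exI[of _ "int n - int n'"]) simp
qed

lemma rat_of_comm:
  fixes M :: "real^'n^'n"
  assumes "invertible M" "commensurate (lat M) (lat (c *\<^sub>R M))"
  shows "c \<in> \<rat> \<and> c \<noteq> 0"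
proof -
  obtain a :: 'n where True by blast
  define e :: "real^'n" where "e = (\<chi> i. of_int (if i = a then 1 else 0))"
  have v: "M *v e \<in> lat M" unfolding lat_image e_def
    by (rule image_eqI[where x="\<lambda>i. if i = a then 1 else 0"]) simp_all
  have "cov (lat M \<inter> lat (c *\<^sub>R M)) (lat M)" using assms(2) comm_cov[OF subgrp_lat subgrp_lat] by blast
  from pig[OF this subgrp_Int[OF subgrp_lat subgrp_lat] subgrp_lat v]
  obtain m :: int where m: "m \<noteq> 0" "of_int m *\<^sub>R (M *v e) \<in> lat (c *\<^sub>R M)" by blast
  then obtain w where w: "of_int m *\<^sub>R (M *v e) = (c *\<^sub>R M) *v (\<chi> i. of_int (w i))"
    unfolding lat_def by blast
  then have "M *v (of_int m *\<^sub>R e) = M *v (c *\<^sub>R (\<chi> i. of_int (w i)))"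
    by (simp add: scaleR_matrix_vector_assoc[symmetric] matrix_vector_mult_scaleR)
  then have "of_int m *\<^sub>R e = c *\<^sub>R (\<chi> i. (of_int (w i)::real))"
    using inv_inj[OF assms(1)] unfolding inj_def by blast
  then have "(of_int m *\<^sub>R e) $ a = (c *\<^sub>R (\<chi> i. (of_int (w i)::real))) $ a" by simp
  then have eq: "of_int m = c * of_int (w a)" unfolding e_def by simp
  then have "c \<noteq> 0" "w a \<noteq> 0" using m by auto
  then have "c = of_int m / of_int (w a)" using eq by (simp add: field_simps)
  then show ?thesis using \<open>c \<noteq> 0\<close> by simp
qed

lemma SO_inv: "R \<in> SO \<Longrightarrow> invertible R"
  unfolding SO_def orthogonal_matrix_def invertible_def by blast

lemma SO_mult: "R \<in> SO \<Longrightarrow> S \<in> SO \<Longrightarrow> R ** S \<in> SO"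
  unfolding SO_def by (simp add: orthogonal_matrix_mul det_mul)

lemma scal_lat: "\<alpha> \<in> scal (lat B) R \<longleftrightarrow> commensurate (lat B) (lat ((\<alpha> *\<^sub>R R) ** B))"
  unfolding scal_def scaled_rot_lat by simp

lemma scal_ratio:
  fixes B :: "real^'n^'n"
  assumes B: "invertible B" and R: "R \<in> SO" and a: "\<alpha> \<in> scal (lat B) R" and b: "\<beta> \<in> scal (lat B) R"
  shows "\<beta> \<noteq> 0 \<and> \<alpha> / \<beta> \<in> \<rat> \<and> \<alpha> / \<beta> \<noteq> 0"
proof -
  have cb: "commensurate (lat B) (lat ((\<beta> *\<^sub>R R) ** B))" using b scal_lat by blast
  have ca: "commensurate (lat B) (lat ((\<alpha> *\<^sub>R R) ** B))" using a scal_lat by blast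
  have b0: "\<beta> \<noteq> 0"
  proof
    assume "\<beta> = 0"
    then have "(\<beta> *\<^sub>R R) ** B = 0 *\<^sub>R B" by (simp add: scalar_matrix_assoc[symmetric])
    then have "commensurate (lat B) (lat (0 *\<^sub>R B))" using cb by (simp only:)
    from rat_of_comm[OF B this] show False by simp
  qed
  define M where "M = (\<beta> *\<^sub>R R) ** B"
  have Mi: "invertible M" unfolding M_def scalar_matrix_assoc[symmetric]
    using invertible_scaleR[OF invertible_mult[OF SO_inv[OF R] B] b0] .
  have e: "(\<alpha> *\<^sub>R R) ** B = (\<alpha> / \<beta>) *\<^sub>R M"
    unfolding M_def using b0 by (simp add: scalar_matrix_assoc[symmetric])
  have "commensurate (lat M) (lat ((\<alpha> / \<beta>) *\<^sub>R M))"
    using comm_trans[OF subgrp_lat subgrp_lat subgrp_lat comm_sym[OF cb[folded M_def]] ca[unfolded e]] .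
  then show ?thesis using rat_of_comm[OF Mi] b0 by blast
qed

lemma scal_mult:
  fixes B :: "real^'n^'n"
  assumes B: "invertible B" and R: "R \<in> SO" and S: "S \<in> SO"
    and a: "\<alpha> \<in> scal (lat B) R" and b: "\<beta> \<in> scal (lat B) S"
  shows "\<alpha> * \<beta> \<in> scal (lat B) (R ** S)"
proof -
  have a0: "\<alpha> \<noteq> 0" using scal_ratio[OF B R a a] by blast
  define A where "A = \<alpha> *\<^sub>R R"
  have Ai: "invertible A" unfolding A_def using invertible_scaleR[OF SO_inv[OF R] a0] .
  have cb: "commensurate (lat B) (lat ((\<beta> *\<^sub>R S) ** B))" using b scal_lat by blast
  have ca: "commensurate (lat B) (lat (A ** B))" using a scal_lat unfolding A_def by blast
  have "commensurate ((\<lambda>x. A *v x) ` lat B) ((\<lambda>x. A *v x) ` lat ((\<beta> *\<^sub>R S) ** B))"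
    using comm_image[OF inv_inj[OF Ai] cb] .
  then have "commensurate (lat (A ** B)) (lat (A ** ((\<beta> *\<^sub>R S) ** B)))"
    unfolding lat_mult .
  moreover have "A ** ((\<beta> *\<^sub>R S) ** B) = ((\<alpha> * \<beta>) *\<^sub>R (R ** S)) ** B"
    unfolding A_def by (simp add: scalar_matrix_assoc[symmetric] matrix_scalar_ac matrix_mul_assoc)
  ultimately have "commensurate (lat (A ** B)) (lat (((\<alpha> * \<beta>) *\<^sub>R (R ** S)) ** B))" by simp
  then show ?thesis unfolding scal_lat using comm_trans[OF subgrp_lat subgrp_lat subgrp_lat ca] by blast
qed

definition Cq :: "real \<Rightarrow> real set" where "Cq a = {x. x \<noteq> 0 \<and> x / a \<in> \<rat>}"

lemma Qstar_eq: "Qstar = {x. x \<in> \<rat> \<and> x \<noteq> 0}"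
  unfolding Qstar_def Rats_def by auto

lemma coset_Cq:
  assumes a: "a \<noteq> 0" shows "Qstar #>\<^bsub>Rstar\<^esub> a = Cq a"
proof (rule Set.set_eqI)
  fix x
  have "x \<in> Qstar #>\<^bsub>Rstar\<^esub> a \<longleftrightarrow> (\<exists>h. h \<in> \<rat> \<and> h \<noteq> 0 \<and> x = h * a)"
    unfolding r_coset_def Rstar_def Qstar_eq by auto
  also have "\<dots> \<longleftrightarrow> x \<in> Cq a"
  proof
    assume "\<exists>h. h \<in> \<rat> \<and> h \<noteq> 0 \<and> x = h * a"
    then show "x \<in> Cq a" unfolding Cq_def using a by auto
  next
    assume "x \<in> Cq a"
    then show "\<exists>h. h \<in> \<rat> \<and> h \<noteq> 0 \<and> x = h * a" unfolding Cq_def using a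
      by (intro exI[of _ "x / a"]) auto
  qed
  finally show "x \<in> Qstar #>\<^bsub>Rstar\<^esub> a \<longleftrightarrow> x \<in> Cq a" .
qed

lemma Cq_one: "Qstar = Cq 1"
  unfolding Qstar_eq Cq_def by auto

lemma Cq_cong: "a \<noteq> 0 \<Longrightarrow> b \<noteq> 0 \<Longrightarrow> a / b \<in> \<rat> \<Longrightarrow> Cq a = Cq b"
proof -
  assume ab: "a \<noteq> 0" "b \<noteq> 0" "a / b \<in> \<rat>"
  have "x / a \<in> \<rat> \<longleftrightarrow> x / b \<in> \<rat>" for x
  proof
    assume "x / a \<in> \<rat>"
    then have "x / a * (a / b) \<in> \<rat>" using Rats_mult[OF _ ab(3)] by blast
    then show "x / b \<in> \<rat>" using ab by simp
  next
    assume "x / b \<in> \<rat>"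
    then have "(x / b) / (a / b) \<in> \<rat>" using Rats_divide[OF _ ab(3)] by blast
    then show "x / a \<in> \<rat>" using ab by simp
  qed
  then show ?thesis unfolding Cq_def by auto
qed

lemma Cq_mult:
  assumes ab: "a \<noteq> 0" "b \<noteq> 0" shows "Cq a <#>\<^bsub>Rstar\<^esub> Cq b = Cq (a * b)"
proof (rule Set.set_eqI)
  fix x
  have "x \<in> Cq a <#>\<^bsub>Rstar\<^esub> Cq b \<longleftrightarrow> (\<exists>h k. h \<in> Cq a \<and> k \<in> Cq b \<and> x = h * k)"
    unfolding set_mult_def Rstar_def by auto
  also have "\<dots> \<longleftrightarrow> x \<in> Cq (a * b)"
  proof
    assume "\<exists>h k. h \<in> Cq a \<and> k \<in> Cq b \<and> x = h * k"
    then obtain h k where hk: "h \<noteq> 0" "h / a \<in> \<rat>" "k \<noteq> 0" "k / b \<in> \<rat>" "x = h * k"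
      unfolding Cq_def by blast
    have "(h / a) * (k / b) \<in> \<rat>" using Rats_mult[OF hk(2) hk(4)] .
    then show "x \<in> Cq (a * b)" unfolding Cq_def using hk by simp
  next
    assume x: "x \<in> Cq (a * b)"
    have "x / b \<in> Cq a" using x ab unfolding Cq_def by (simp add: field_simps)
    moreover have "b \<in> Cq b" using ab unfolding Cq_def by simp
    moreover have "x = (x / b) * b" using ab by simp
    ultimately show "\<exists>h k. h \<in> Cq a \<and> k \<in> Cq b \<and> x = h * k" by blast
  qed
  finally show "x \<in> Cq a <#>\<^bsub>Rstar\<^esub> Cq b \<longleftrightarrow> x \<in> Cq (a * b)" .
qed

lemma Cq_one_iff:
  assumes a0: "a \<noteq> 0" shows "Cq a = Qstar \<longleftrightarrow> a \<in> \<rat>"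
proof
  assume a: "Cq a = Qstar"
  have "a \<in> Cq a" using a0 unfolding Cq_def by simp
  then have "a \<in> Qstar" using a by simp
  then show "a \<in> \<rat>" unfolding Qstar_eq by simp
next
  assume "a \<in> \<rat>"
  then show "Cq a = Qstar" unfolding Cq_one using a0 by (intro Cq_cong) auto
qed

theorem mainTheorem2:
  fixes \<Gamma> :: "(real^'n) set"
  assumes "CARD('n) \<ge> 2"
    and "is_lattice \<Gamma>"
  shows "eta \<Gamma> \<in> hom (SOS_group \<Gamma>) (Rstar Mod Qstar)
    \<and> kernel (SOS_group \<Gamma>) (Rstar Mod Qstar) (eta \<Gamma>) = SOC \<Gamma>"
proof -
  obtain B :: "real^'n^'n" where B: "invertible B" "\<Gamma> = lat B"
    using assms(2) unfolding is_lattice_def lat_def by blast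
  define al where "al R = (SOME \<alpha>. \<alpha> \<in> scal \<Gamma> R)" for R
  have al: "al R \<in> scal \<Gamma> R" if "R \<in> SOS \<Gamma>" for R
  proof -
    have "\<exists>\<alpha>. \<alpha> \<in> scal \<Gamma> R" using that unfolding SOS_def scal_def by blast
    then show ?thesis unfolding al_def by (rule someI_ex)
  qed
  have SOS_SO: "R \<in> SOS \<Gamma> \<Longrightarrow> R \<in> SO" for R unfolding SOS_def by blast
  have al0: "al R \<noteq> 0" if "R \<in> SOS \<Gamma>" for R
    using scal_ratio[OF B(1) SOS_SO[OF that] al[OF that, unfolded B(2)] al[OF that, unfolded B(2)]] by blast
  have eta: "eta \<Gamma> R = Cq (al R)" if "R \<in> SOS \<Gamma>" for R
    unfolding eta_def al_def[symmetric] using coset_Cq[OF al0[OF that]] .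
  have closed: "R ** S \<in> SOS \<Gamma>" if RS0: "R \<in> SOS \<Gamma>" "S \<in> SOS \<Gamma>" for R S
  proof -
    obtain a b where ab: "a > 0" "a \<in> scal \<Gamma> R" "b > 0" "b \<in> scal \<Gamma> S"
      using RS0 unfolding SOS_def scal_def by blast
    have "a * b \<in> scal \<Gamma> (R ** S)"
      unfolding B(2) using scal_mult[OF B(1) SOS_SO[OF RS0(1)] SOS_SO[OF RS0(2)] ab(2)[unfolded B(2)] ab(4)[unfolded B(2)]] .
    then show ?thesis unfolding SOS_def scal_def using SO_mult[OF SOS_SO[OF RS0(1)] SOS_SO[OF RS0(2)]] ab
      by (auto intro!: exI[of _ "a * b"])
  qed
  have hom: "eta \<Gamma> \<in> hom (SOS_group \<Gamma>) (Rstar Mod Qstar)"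
    unfolding hom_def
  proof (intro CollectI conjI funcsetI ballI)
    fix R assume "R \<in> carrier (SOS_group \<Gamma>)"
    then have R: "R \<in> SOS \<Gamma>" unfolding SOS_group_def by simp
    have "eta \<Gamma> R = Qstar #>\<^bsub>Rstar\<^esub> al R" using eta[OF R] coset_Cq[OF al0[OF R]] by simp
    then show "eta \<Gamma> R \<in> carrier (Rstar Mod Qstar)"
      unfolding FactGroup_def RCOSETS_def Rstar_def using al0[OF R] by auto
  next
    fix R S assume "R \<in> carrier (SOS_group \<Gamma>)" "S \<in> carrier (SOS_group \<Gamma>)"
    then have R: "R \<in> SOS \<Gamma>" and S: "S \<in> SOS \<Gamma>" unfolding SOS_group_def by simp_all
    have RS: "R ** S \<in> SOS \<Gamma>" using closed[OF R S] .
    have m: "al R * al S \<in> scal \<Gamma> (R ** S)"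
      unfolding B(2) using scal_mult[OF B(1) SOS_SO[OF R] SOS_SO[OF S] al[OF R, unfolded B(2)] al[OF S, unfolded B(2)]] .
    have "al (R ** S) / (al R * al S) \<in> \<rat>"
      using scal_ratio[OF B(1) SOS_SO[OF RS] al[OF RS, unfolded B(2)] m[unfolded B(2)]] by blast
    then have "Cq (al (R ** S)) = Cq (al R * al S)"
      using al0[OF R] al0[OF S] al0[OF RS] by (intro Cq_cong) auto
    then show "eta \<Gamma> (R \<otimes>\<^bsub>SOS_group \<Gamma>\<^esub> S) = eta \<Gamma> R \<otimes>\<^bsub>Rstar Mod Qstar\<^esub> eta \<Gamma> S"
      unfolding SOS_group_def FactGroup_def using eta[OF R] eta[OF S] eta[OF RS]
        Cq_mult[OF al0[OF R] al0[OF S]] by simp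
  qed
  have ker: "kernel (SOS_group \<Gamma>) (Rstar Mod Qstar) (eta \<Gamma>) = SOC \<Gamma>"
  proof (rule Set.set_eqI, rule iffI)
    fix R assume "R \<in> kernel (SOS_group \<Gamma>) (Rstar Mod Qstar) (eta \<Gamma>)"
    then have R: "R \<in> SOS \<Gamma>" and e: "eta \<Gamma> R = Qstar"
      unfolding kernel_def SOS_group_def FactGroup_def by simp_all
    have "Cq (al R) = Qstar" using e eta[OF R] by simp
    then have q: "al R \<in> \<rat>" using Cq_one_iff[OF al0[OF R]] by blast
    define M where "M = (al R *\<^sub>R R) ** B"
    have c1: "commensurate (lat B) (lat M)" using al[OF R, unfolded B(2) scal_lat] unfolding M_def .
    have "(1 / al R) *\<^sub>R M = R ** B" unfolding M_def using al0[OF R]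
      by (simp add: scalar_matrix_assoc[symmetric])
    moreover have "commensurate (lat ((1 / al R) *\<^sub>R M)) (lat M)"
      by (rule comm_rat[OF Rats_divide[OF Rats_1 q]]) (simp add: al0[OF R])
    ultimately have c2: "commensurate (lat (R ** B)) (lat M)" by (simp only:)
    have "commensurate (lat B) (lat (R ** B))"
      using comm_trans[OF subgrp_lat subgrp_lat subgrp_lat c1 comm_sym[OF c2]] .
    then have "commensurate \<Gamma> ((\<lambda>x. R *v x) ` \<Gamma>)" unfolding B(2) lat_mult .
    then show "R \<in> SOC \<Gamma>" unfolding SOC_def using SOS_SO[OF R] by blast
  next
    fix R assume R: "R \<in> SOC \<Gamma>"
    have "scaled_rot 1 R \<Gamma> = (\<lambda>x. R *v x) ` \<Gamma>" unfolding scaled_rot_def by simp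
    then have one: "1 \<in> scal \<Gamma> R" using R unfolding SOC_def scal_def by simp
    have "R \<in> SO" using R unfolding SOC_def by blast
    then have RS: "R \<in> SOS \<Gamma>" using one unfolding SOS_def scal_def
      by (intro CollectI conjI exI[of _ 1]) simp_all
    have "al R / 1 \<in> \<rat>" using scal_ratio[OF B(1) SOS_SO[OF RS] al[OF RS, unfolded B(2)] one[unfolded B(2)]] by blast
    then have "al R \<in> \<rat>" by simp
    then have "Cq (al R) = Qstar" using Cq_one_iff[OF al0[OF RS]] by blast
    then have "eta \<Gamma> R = Qstar" using eta[OF RS] by simp
    then show "R \<in> kernel (SOS_group \<Gamma>) (Rstar Mod Qstar) (eta \<Gamma>)"
      unfolding kernel_def SOS_group_def FactGroup_def using RS by simp
  qed
  show ?thesis using hom ker by blast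
qed

end
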